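(* Let $A\in\mathbf{R}^{n\times n}$, $B\in\mathbf{R}^{n\times p}$, $C\in\mathbf{R}^{q\times n}$, $K\in\mathbf{R}^{p\times n}$, $L\in\mathbf{R}^{n\times q}$. Let $\mathcal{G}\in\Gamma_N$ with row-stochastic matrix $\mathcal{D}$, and let $1,\lambda_2,\dots,\lambda_N$ be the eigenvalues of $\mathcal{D}$ (with multiplicity), where $1$ is simple and $|\lambda_i|<1$ for $i=2,\dots,N$. If $A+BK$ and $A+(1-\lambda_i)LC$, $i=2,\dots,N$, are all Schur stable, then the agents reach consensus under the observer-type protocol: for every initial condition $x_i(0),v_i(0)$, $\|x_i(k)-x_j(k)\|\to 0$ as $k\to\infty$ for all $i,j$.
   Context: Agents: $x_i(k+1)=Ax_i(k)+Bu_i(k)$, $y_i=Cx_i$, $i=1,\dots,N$. For a directed graph $\mathcal{G}$ on nodes $\{1,\dots,N\}$ (an edge $(j,i)$ means agent $i$ receives information from agent $j$), its row-stochastic matrix $\mathcal{D}=(d_{ij})\in\mathbf{R}^{N\times N}$ satisfies $d_{ii}>0$, $d_{ij}>0$ for $j\ne i$ iff $(j,i)$ is an edge and $d_{ij}=0$ otherwise, and $\sum_j d_{ij}=1$. $\Gamma_N$ is the set of directed graphs on $N$ nodes containing a directed spanning tree (a root node with a directed path to every other node). Protocol: $\zeta_i=\sum_{j=1}^N d_{ij}(y_i-y_j)$, $v_i(k+1)=(A+BK)v_i(k)+L\big(\sum_{j=1}^N d_{ij}C(v_i-v_j)-\zeta_i\big)$, $u_i=Kv_i$, with $v_i\in\mathbf{R}^n$.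 A matrix is Schur stable if all its eigenvalues have modulus $<1$. *)

theory Defs
  imports "HOL-Analysis.Analysis" "HOL-Computational_Algebra.Polynomial"
begin

definition cmat :: "real^'c^'r \<Rightarrow> complex^'c^'r" where
  "cmat M = (\<chi> i j. complex_of_real (M $ i $ j))"

definition schur_stable :: "complex^'n^'n \<Rightarrow> bool" where
  "schur_stable M \<longleftrightarrow> (\<forall>\<mu> v. v \<noteq> 0 \<and> M *v v = \<mu> *s v \<longrightarrow> cmod \<mu> < 1)"

definition charpoly :: "complex^'n^'n \<Rightarrow> complex poly" where
  "charpoly M = det (\<chi> i j. (if i = j then [:0, 1:] else 0) - [: M $ i $ j :])"

text \<open>D is the row-stochastic matrix of the directed graph with edge set E
  (an edge (j,i) means agent i receives information from agent j).\<close>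
definition row_stochastic_of :: "('N \<times> 'N) set \<Rightarrow> real^'N^'N \<Rightarrow> bool" where
  "row_stochastic_of E D \<longleftrightarrow>
     (\<forall>i. D $ i $ i > 0) \<and>
     (\<forall>i j. i \<noteq> j \<longrightarrow> (D $ i $ j > 0 \<longleftrightarrow> (j, i) \<in> E)) \<and>
     (\<forall>i j. i \<noteq> j \<longrightarrow> (j, i) \<notin> E \<longrightarrow> D $ i $ j = 0) \<and>
     (\<forall>i. (\<Sum>j\<in>UNIV. D $ i $ j) = 1)"

definition has_spanning_tree :: "('N \<times> 'N) set \<Rightarrow> bool" where
  "has_spanning_tree E \<longleftrightarrow> (\<exists>r. \<forall>i. (r, i) \<in> E\<^sup>*)"

end

theory Submission
  imports Defs "Jordan_Normal_Form.Schur_Decomposition" "Jordan_Normal_Form.Spectral_Radius"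
begin

no_notation Matrix.vec_index (infixl "$" 100)

section \<open>Indexing finite types by natural numbers\<close>

definition idx :: "nat \<Rightarrow> 'a::finite" where
  "idx = (SOME f. bij_betw f {0..<CARD('a)} (UNIV::'a set))"

lemma idx_bij: "bij_betw (idx::nat \<Rightarrow> 'a::finite) {0..<CARD('a)} UNIV"
proof -
  obtain h where "bij_betw h {0..<CARD('a)} (UNIV::'a set)"
    using ex_bij_betw_nat_finite[of "UNIV::'a set"] by auto
  hence "bij_betw (SOME f. bij_betw f {0..<CARD('a)} (UNIV::'a set)) {0..<CARD('a)} (UNIV::'a set)"
    by (rule someI[where P="\<lambda>f. bij_betw f {0..<CARD('a)} (UNIV::'a set)"])
  thus ?thesis by (simp add: idx_def)
qed

definition unidx :: "'a::finite \<Rightarrow> nat" where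
  "unidx = inv_into {0..<CARD('a)} idx"

lemma unidx_less[simp]: "unidx (a::'a::finite) < CARD('a)"
  using idx_bij[where 'a='a] unfolding unidx_def
  by (metis atLeastLessThan_iff bij_betw_def inv_into_into iso_tuple_UNIV_I)

lemma idx_unidx[simp]: "idx (unidx (a::'a::finite)) = a"
  using idx_bij[where 'a='a] unfolding unidx_def
  by (meson bij_betw_inv_into_right iso_tuple_UNIV_I)

lemma unidx_idx[simp]: "i < CARD('a::finite) \<Longrightarrow> unidx (idx i :: 'a) = i"
  using idx_bij[where 'a='a] unfolding unidx_def
  by (simp add: bij_betw_inv_into_left)

lemma idx_inj: "i < CARD('a::finite) \<Longrightarrow> j < CARD('a) \<Longrightarrow> (idx i :: 'a) = idx j \<longleftrightarrow> i = j"
  by (metis unidx_idx)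

lemma inj_on_idx: "inj_on (idx :: nat \<Rightarrow> 'a::finite) {0..<CARD('a)}"
  using idx_bij bij_betw_def by blast

lemma sum_idx: "(\<Sum>a\<in>UNIV. g a) = (\<Sum>i=0..<CARD('a::finite). g (idx i :: 'a))"
  by (rule sum.reindex_bij_betw[symmetric, OF idx_bij])

lemma prod_idx: "(\<Prod>a\<in>UNIV. g a) = (\<Prod>i=0..<CARD('a::finite). g (idx i :: 'a))"
  by (rule prod.reindex_bij_betw[symmetric, OF idx_bij])

definition to_mat :: "'a::zero^'c::finite^'r::finite \<Rightarrow> 'a mat" where
  "to_mat M = Matrix.mat CARD('r) CARD('c) (\<lambda>(i,j). M $ idx i $ idx j)"

definition to_vec :: "'a::zero^'n::finite \<Rightarrow> 'a Matrix.vec" where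
  "to_vec v = Matrix.vec CARD('n) (\<lambda>i. v $ idx i)"

definition of_vec :: "'a Matrix.vec \<Rightarrow> 'a^'n::finite" where
  "of_vec w = (\<chi> j. vec_index w (unidx j))"

lemma to_mat_carrier[simp]: "to_mat (M::'a::zero^'c::finite^'r::finite) \<in> carrier_mat CARD('r) CARD('c)"
  unfolding to_mat_def by simp

lemma to_mat_dims[simp]: "dim_row (to_mat (M::'a::zero^'c::finite^'r::finite)) = CARD('r)"
   "dim_col (to_mat (M::'a::zero^'c::finite^'r::finite)) = CARD('c)"
  unfolding to_mat_def by simp_all

lemma to_mat_index[simp]: "i < CARD('r) \<Longrightarrow> j < CARD('c) \<Longrightarrow>
   to_mat (M::'a::zero^'c::finite^'r::finite) $$ (i,j) = M $ idx i $ idx j"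
  unfolding to_mat_def by simp

lemma to_vec_carrier[simp]: "to_vec (v::'a::zero^'n::finite) \<in> carrier_vec CARD('n)"
  unfolding to_vec_def by simp

lemma to_vec_dim[simp]: "dim_vec (to_vec (v::'a::zero^'n::finite)) = CARD('n)"
  unfolding to_vec_def by simp

lemma to_vec_index[simp]: "i < CARD('n) \<Longrightarrow> vec_index (to_vec (v::'a::zero^'n::finite)) i = v $ idx i"
  unfolding to_vec_def by simp

lemma of_to_vec[simp]: "of_vec (to_vec v) = (v::'a::zero^'n::finite)"
  unfolding of_vec_def by (simp add: vec_eq_iff)

lemma to_of_vec: "w \<in> carrier_vec CARD('n::finite) \<Longrightarrow> to_vec (of_vec w :: 'a::zero^'n) = w"
  unfolding of_vec_def by (auto simp: to_vec_def)

lemma to_vec_inj: "to_vec (v::'a::zero^'n::finite) = to_vec w \<longleftrightarrow> v = w"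
  by (metis of_to_vec)

lemma to_vec_zero: "to_vec (0::'a::zero^'n::finite) = 0\<^sub>v CARD('n)"
  by (auto simp: to_vec_def)

lemma to_mat_mult_vec: "to_vec ((M::'a::comm_semiring_1^'c::finite^'r::finite) *v v) = to_mat M *\<^sub>v to_vec v"
  by (rule eq_vecI) (auto simp: matrix_vector_mult_def scalar_prod_def sum_idx[where 'a='c] to_vec_def)

lemma to_vec_smult: "to_vec (c *s (v::'a::comm_semiring_1^'n::finite)) = c \<cdot>\<^sub>v to_vec v"
  by (rule eq_vecI) auto

lemma eigen_bridge:
  assumes "eigenvalue (to_mat (M::'a::comm_ring_1^'n::finite^'n)) \<mu>"
  shows "\<exists>v. v \<noteq> 0 \<and> M *v v = \<mu> *s v"
proof -
  from assms obtain w where w: "w \<in> carrier_vec CARD('n)" "w \<noteq> 0\<^sub>v CARD('n)"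
    "to_mat M *\<^sub>v w = \<mu> \<cdot>\<^sub>v w"
    unfolding eigenvalue_def eigenvector_def by auto
  define v :: "'a^'n" where "v = of_vec w"
  have tv: "to_vec v = w" unfolding v_def using w(1) by (rule to_of_vec)
  have "v \<noteq> 0" using tv w(2) to_vec_zero by metis
  moreover have "to_vec (M *v v) = to_vec (\<mu> *s v)"
    unfolding to_mat_mult_vec to_vec_smult tv using w(3) by simp
  ultimately show ?thesis unfolding to_vec_inj by blast
qed

section \<open>Determinant bridge\<close>

lemma det_bridge: "Determinant.det (to_mat (M::'a::comm_ring_1^'n::finite^'n)) = Determinants.det M"
proof -
  let ?n = "CARD('n)"
  let ?h = "map_permutation {0..<?n} (idx::nat\<Rightarrow>'n)"
  have bij: "bij_betw ?h {p. p permutes {0..<?n}} {p. p permutes (UNIV::'n set)}"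
  proof (rule bij_betw_byWitness[where f'="map_permutation UNIV unidx"])
    show "\<forall>p\<in>{p. p permutes {0..<?n}}. map_permutation UNIV unidx (?h p) = p"
      by (auto intro!: map_permutation_compose_inv idx_bij)
    have ub: "bij_betw (unidx::'n\<Rightarrow>nat) UNIV {0..<?n}"
      unfolding unidx_def by (rule bij_betw_inv_into[OF idx_bij])
    show "\<forall>p\<in>{p. p permutes (UNIV::'n set)}. ?h (map_permutation UNIV unidx p) = p"
      by (auto intro!: map_permutation_compose_inv ub)
    show "?h ` {p. p permutes {0..<?n}} \<subseteq> {p. p permutes UNIV}"
      using map_permutation_permutes[OF idx_bij] by auto
    show "map_permutation UNIV unidx ` {p. p permutes (UNIV::'n set)} \<subseteq> {p. p permutes {0..<?n}}"
      using map_permutation_permutes[OF ub] by auto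
  qed
  have "Determinants.det M = (\<Sum>p\<in>{p. p permutes {0..<?n}}.
      of_int (sign (?h p)) * (\<Prod>i\<in>UNIV. M $ i $ ?h p i))"
    unfolding Determinants.det_def by (rule sum.reindex_bij_betw[symmetric, OF bij])
  also have "\<dots> = (\<Sum>p\<in>{p. p permutes {0..<?n}}. signof p * (\<Prod>i=0..<?n. to_mat M $$ (i, p i)))"
  proof (rule sum.cong[OF refl])
    fix p assume p: "p \<in> {p. p permutes {0..<?n}}"
    hence pp: "p permutes {0..<?n}" by simp
    have "sign (?h p) = sign p" by (rule sign_map_permutation[OF inj_on_idx pp]) simp
    moreover have "(\<Prod>i\<in>UNIV. M $ i $ ?h p i) = (\<Prod>i=0..<?n. to_mat M $$ (i, p i))"
      unfolding prod_idx[where 'a='n]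
    proof (rule prod.cong[OF refl])
      fix i assume i: "i \<in> {0..<?n}"
      have pi: "p i < ?n" using pp i by (simp add: permutes_in_image)
      have "?h p (idx i) = idx (p i)" by (rule map_permutation_apply[OF inj_on_idx i])
      thus "M $ idx i $ ?h p (idx i) = to_mat M $$ (i, p i)" using i pi by simp
    qed
    ultimately show "of_int (sign (?h p)) * (\<Prod>i\<in>UNIV. M $ i $ ?h p i) =
       signof p * (\<Prod>i=0..<?n. to_mat M $$ (i, p i))" by simp
  qed
  also have "\<dots> = Determinant.det (to_mat M)"
    by (rule Determinant.det_def'[symmetric]) simp
  finally show ?thesis ..
qed

lemma charpoly_bridge: "charpoly (M::complex^'n::finite^'n) = char_poly (to_mat M)"
proof -
  have e: "to_mat (\<chi> i j. (if i = j then [:0, 1:] else 0) - [: M $ i $ j :]) = char_poly_matrix (to_mat M)"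
  proof (rule eq_matI)
    fix i j assume "i < dim_row (char_poly_matrix (to_mat M))" "j < dim_col (char_poly_matrix (to_mat M))"
    hence i: "i < CARD('n)" "j < CARD('n)" by (simp_all add: char_poly_matrix_def)
    have "(idx i :: 'n) = idx j \<longleftrightarrow> i = j" using i by (rule idx_inj)
    thus "to_mat (\<chi> i j. (if i = j then [:0, 1:] else 0) - [: M $ i $ j :]) $$ (i, j) =
      char_poly_matrix (to_mat M) $$ (i, j)" using i by (simp add: char_poly_matrix_def)
  qed (simp_all add: char_poly_matrix_def)
  show ?thesis unfolding charpoly_def char_poly_def det_bridge[symmetric] e ..
qed


lemma eigen_bridge2:
  assumes "v \<noteq> 0" "(M::'a::comm_ring_1^'n::finite^'n) *v v = \<mu> *s v"
  shows "eigenvalue (to_mat M) \<mu>"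
  unfolding eigenvalue_def eigenvector_def
  by (rule exI[of _ "to_vec v"])
     (use assms in \<open>auto simp: to_mat_mult_vec[symmetric] to_vec_smult[symmetric] to_vec_zero[symmetric] to_vec_inj\<close>)

section \<open>Iteration and decay\<close>

definition iter :: "'a::comm_semiring_1^'n::finite^'n \<Rightarrow> nat \<Rightarrow> 'a^'n \<Rightarrow> 'a^'n" where
  "iter M k = ((*v) M) ^^ k"

lemma iter_0[simp]: "iter M 0 w = w" by (simp add: iter_def)

lemma iter_Suc: "iter M (Suc k) w = iter M k (M *v w)"
  unfolding iter_def funpow_Suc_right by simp

lemma iter_Suc': "iter M (Suc k) w = M *v iter M k w"
  by (simp add: iter_def)

lemma to_vec_iter: "to_vec (iter (M::'a::comm_semiring_1^'n::finite^'n) k w) = (to_mat M ^\<^sub>m k) *\<^sub>v to_vec w"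
proof (induction k arbitrary: w)
  case 0
  show ?case by (simp add: one_mult_mat_vec[OF to_vec_carrier])
next
  case (Suc k)
  have "to_vec (iter M (Suc k) w) = (to_mat M ^\<^sub>m k) *\<^sub>v (to_mat M *\<^sub>v to_vec w)"
    by (simp add: iter_Suc Suc to_mat_mult_vec)
  also have "\<dots> = (to_mat M ^\<^sub>m k * to_mat M) *\<^sub>v to_vec w"
    by (rule assoc_mult_mat_vec[symmetric]) (auto intro: pow_carrier_mat)
  finally show ?case by simp
qed

lemma mv_scaleR: "(M::complex^'n::finite^'m::finite) *v (c *\<^sub>R x) = c *\<^sub>R (M *v x)"
  by (simp add: Finite_Cartesian_Product.vec_eq_iff matrix_vector_mult_def scaleR_sum_right)

lemma iter_scale:
  fixes M :: "complex^'n::finite^'n"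
  shows "iter (\<chi> i j. of_real t * M $ i $ j) k w = t^k *\<^sub>R iter M k w"
proof (induction k)
  case (Suc k)
  have e: "(\<chi> i j. of_real t * M $ i $ j) *v z = t *\<^sub>R (M *v z)" for z :: "complex^'n"
  proof (rule Finite_Cartesian_Product.vec_eq_iff[THEN iffD2], rule allI)
    fix i show "((\<chi> i j. of_real t * M $ i $ j) *v z) $ i = (t *\<^sub>R (M *v z)) $ i"
      by (simp add: matrix_vector_mult_def sum_distrib_left mult.assoc scaleR_conv_of_real[where 'a=complex])
  qed
  show ?case by (simp add: iter_Suc' Suc e mv_scaleR)
qed simp

lemma iter_add: "iter M k (a + b) = iter M k a + iter M k b"
  by (induction k) (simp_all add: iter_Suc' matrix_vector_right_distrib)

lemma iter_zero: "iter M k 0 = 0"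
  by (induction k) (simp_all add: iter_Suc')

lemma iter_sum: "iter M k (\<Sum>l\<in>S. g l) = (\<Sum>l\<in>S. iter M k (g l))"
  by (induction S rule: infinite_finite_induct) (simp_all add: iter_zero iter_add)

lemma schur_decay:
  fixes M :: "complex^'n::finite^'n"
  assumes stab: "schur_stable M"
  shows "\<exists>c \<rho>. 0 < \<rho> \<and> \<rho> < 1 \<and> (\<forall>k w. norm (iter M k w) \<le> c * \<rho>^k * norm w)"
proof -
  let ?n = "CARD('n)"
  let ?A = "to_mat M"
  define S where "S = {\<mu>. \<exists>v. v \<noteq> 0 \<and> M *v v = \<mu> *s v}"
  have S_sub: "S \<subseteq> {\<mu>. poly (char_poly ?A) \<mu> = 0}"
    using eigen_bridge2 eigenvalue_root_char_poly[OF to_mat_carrier] unfolding S_def by blast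
  have "char_poly ?A \<noteq> 0"
    using degree_monic_char_poly[OF to_mat_carrier[of M]] by auto
  hence finS: "finite S" using S_sub poly_roots_finite finite_subset by blast
  have Slt: "\<mu> \<in> S \<Longrightarrow> cmod \<mu> < 1" for \<mu>
    using stab unfolding S_def schur_stable_def by blast
  define m where "m = Max (insert 0 (norm ` S))"
  have m0: "0 \<le> m" unfolding m_def using finS by simp
  have m1: "m < 1" unfolding m_def using finS Slt by (subst Max_less_iff) auto
  have mS: "\<mu> \<in> S \<Longrightarrow> cmod \<mu> \<le> m" for \<mu> unfolding m_def using finS by (intro Max_ge) auto
  define t :: real where "t = 2 / (1 + m)"
  have t1: "1 < t" unfolding t_def using m0 m1 by (simp add: field_simps)
  have tm: "t * m < 1" unfolding t_def using m0 m1 by (simp add: field_simps)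
  define M' :: "complex^'n^'n" where "M' = (\<chi> i j. of_real t * M $ i $ j)"
  let ?A' = "to_mat M'"
  have A'c: "?A' \<in> carrier_mat ?n ?n" by simp
  obtain as where cA: "char_poly ?A' = (\<Prod>a\<leftarrow>as. [:- a, 1:])"
    using char_poly_factorized[OF A'c] by blast
  have as_lt: "norm a < 1" if a: "a \<in> set as" for a
  proof -
    have "poly (char_poly ?A') a = 0" unfolding cA using a by (rule linear_poly_root)
    hence "eigenvalue ?A' a" using eigenvalue_root_char_poly[OF A'c] by simp
    then obtain v where v: "v \<noteq> 0" "M' *v v = a *s v" using eigen_bridge by blast
    have "M' *v v = of_real t *s (M *v v)"
      by (simp add: M'_def Finite_Cartesian_Product.vec_eq_iff matrix_vector_mult_def sum_distrib_left mult.assoc)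
    hence "M *v v = (a / of_real t) *s v"
    proof -
      assume h: "M' *v v = of_real t *s (M *v v)"
      have tn: "(of_real t :: complex) \<noteq> 0" using t1 by simp
      have "M *v v = (inverse (of_real t) * of_real t) *s (M *v v)" using tn by simp
      also have "\<dots> = inverse (of_real t) *s (of_real t *s (M *v v))" by (simp only: vector_smult_assoc)
      also have "\<dots> = inverse (of_real t) *s (a *s v)" using h v(2) by simp
      also have "\<dots> = (a / of_real t) *s v" by (simp add: vector_smult_assoc divide_inverse mult.commute)
      finally show ?thesis .
    qed
    hence "a / of_real t \<in> S" unfolding S_def using v(1) by blast
    hence "cmod (a / of_real t) \<le> m" by (rule mS)
    hence "cmod a \<le> t * m" using t1 by (simp add: norm_divide field_simps)
    thus ?thesis using tm by simp
  qed
  have jnf: "\<exists>n_as. jordan_nf ?A' n_as" by (rule jordan_nf_exists[OF A'c cA])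
  obtain c1 c2 where nb: "\<And>k. norm_bound (?A' ^\<^sub>m k) (c1 + c2 * real k ^ (1 - 1))"
    using factored_char_poly_norm_bound[OF A'c cA jnf, of 1] as_lt by fastforce
  define c0 where "c0 = c1 + c2"
  have nb': "i < ?n \<Longrightarrow> j < ?n \<Longrightarrow> norm ((?A' ^\<^sub>m k) $$ (i,j)) \<le> c0" for i j k
    using nb[of k] pow_carrier_mat[OF A'c, of k] unfolding norm_bound_def c0_def by auto
  have bnd: "norm (iter M' k w) \<le> real ?n * (real ?n * c0) * norm w" for k w
  proof -
    have comp: "cmod (iter M' k w $ a) \<le> real ?n * c0 * norm w" for a
    proof -
      define i where "i = unidx a"
      have i: "i < ?n" "a = idx i" unfolding i_def by simp_all
      have "iter M' k w $ a = vec_index (to_vec (iter M' k w)) i" using i by simp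
      also have "\<dots> = (\<Sum>j=0..<?n. (?A' ^\<^sub>m k) $$ (i,j) * vec_index (to_vec w) j)"
        unfolding to_vec_iter using i pow_carrier_mat[OF A'c, of k]
        by (simp add: scalar_prod_def)
      finally have "cmod (iter M' k w $ a) \<le> (\<Sum>j=0..<?n. cmod ((?A' ^\<^sub>m k) $$ (i,j) * vec_index (to_vec w) j))"
        by (simp add: norm_sum)
      also have "\<dots> \<le> (\<Sum>j=0..<?n. c0 * norm w)"
      proof (rule sum_mono)
        fix j assume j: "j \<in> {0..<?n}"
        have "cmod (vec_index (to_vec w) j) = cmod (w $ idx j)" using j by simp
        also have "\<dots> \<le> norm w" by (rule Finite_Cartesian_Product.norm_nth_le)
        finally have "cmod (vec_index (to_vec w) j) \<le> norm w" .
        thus "cmod ((?A' ^\<^sub>m k) $$ (i,j) * vec_index (to_vec w) j) \<le> c0 * norm w"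
          unfolding norm_mult using nb'[OF i(1), of j k] j
          by (intro mult_mono) (auto intro: order_trans[OF norm_ge_zero])
      qed
      finally show ?thesis by simp
    qed
    have "norm (iter M' k w) \<le> (\<Sum>a\<in>UNIV. cmod (iter M' k w $ a))" unfolding norm_vec_def by (rule L2_set_le_sum) simp
    also have "\<dots> \<le> (\<Sum>a\<in>(UNIV::'n set). real ?n * c0 * norm w)" by (rule sum_mono) (rule comp)
    finally show ?thesis by simp
  qed
  show ?thesis
  proof (intro exI conjI allI)
    show "0 < 1 / t" "1 / t < 1" using t1 by simp_all
    fix k w
    have "iter M k w = (1/t)^k *\<^sub>R iter M' k w" unfolding M'_def iter_scale using t1
      by (simp add: power_one_over field_simps)
    hence "norm (iter M k w) = (1/t)^k * norm (iter M' k w)" using t1 by simp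
    also have "\<dots> \<le> (1/t)^k * (real ?n * (real ?n * c0) * norm w)"
      using bnd t1 by (intro mult_left_mono) auto
    finally show "norm (iter M k w) \<le> (real ?n * (real ?n * c0)) * (1/t)^k * norm w"
      by (simp add: algebra_simps)
  qed
qed


lemma iter_closed:
  fixes M :: "complex^'n::finite^'n"
  assumes rec: "\<And>k. z (Suc k) = M *v z k + u k"
  shows "z (K + m) = iter M m (z K) + (\<Sum>l<m. iter M (m - Suc l) (u (K + l)))"
proof (induction m)
  case 0 show ?case by simp
next
  case (Suc m)
  have "z (K + Suc m) = M *v z (K + m) + u (K + m)" using rec by simp
  also have "\<dots> = iter M (Suc m) (z K) + (\<Sum>l<m. iter M (Suc (m - Suc l)) (u (K + l))) + u (K + m)"
    unfolding Suc by (simp add: matrix_vector_right_distrib Cartesian_Space.vec.sum iter_Suc')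
  also have "(\<Sum>l<m. iter M (Suc (m - Suc l)) (u (K + l))) = (\<Sum>l<m. iter M (Suc m - Suc l) (u (K + l)))"
    by (rule sum.cong) (auto simp: Suc_diff_Suc)
  finally show ?case by (simp add: add.assoc)
qed

lemma iss:
  fixes M :: "complex^'n::finite^'n"
  assumes stab: "schur_stable M"
    and rec: "\<And>k. z (Suc k) = M *v z k + u k"
    and u: "u \<longlonglongrightarrow> 0"
  shows "z \<longlonglongrightarrow> 0"
proof -
  obtain c \<rho> where \<rho>: "0 < \<rho>" "\<rho> < 1" and cb: "\<And>k w. norm (iter M k w) \<le> c * \<rho>^k * norm w"
    using schur_decay[OF stab] by blast
  define C where "C = max c 1"
  have C1: "1 \<le> C" unfolding C_def by simp
  have Cb: "norm (iter M k w) \<le> C * \<rho>^k * norm w" for k w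
  proof -
    have "c * \<rho>^k * norm w \<le> C * \<rho>^k * norm w" unfolding C_def
      using \<rho> by (intro mult_right_mono) auto
    thus ?thesis using cb[of k w] by linarith
  qed
  show ?thesis
  proof (rule LIMSEQ_I)
    fix \<epsilon> :: real assume \<epsilon>: "0 < \<epsilon>"
    define \<delta> where "\<delta> = \<epsilon> * (1 - \<rho>) / (2 * C)"
    have \<delta>: "0 < \<delta>" unfolding \<delta>_def using \<epsilon> \<rho> C1 by simp
    obtain K where K: "\<And>k. k \<ge> K \<Longrightarrow> norm (u k - 0) < \<delta>" using LIMSEQ_D[OF u \<delta>] by blast
    have "(\<lambda>m. C * norm (z K) * \<rho>^m) \<longlonglongrightarrow> 0"
      by (intro tendsto_mult_right_zero LIMSEQ_power_zero) (use \<rho> in auto)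
    then obtain m0 where m0: "\<And>m. m \<ge> m0 \<Longrightarrow> norm (C * norm (z K) * \<rho>^m - 0) < \<epsilon> / 2"
      using LIMSEQ_D[of _ 0 "\<epsilon>/2"] \<epsilon> by (metis half_gt_zero)
    show "\<exists>no. \<forall>n\<ge>no. norm (z n - 0) < \<epsilon>"
    proof (intro exI allI impI)
      fix n assume n: "K + m0 \<le> n"
      define m where "m = n - K"
      have nm: "n = K + m" "m0 \<le> m" unfolding m_def using n by auto
      have "norm (z n) \<le> norm (iter M m (z K)) + norm (\<Sum>l<m. iter M (m - Suc l) (u (K + l)))"
        unfolding nm(1) iter_closed[of z M u, OF rec] by (rule norm_triangle_ineq)
      also have "\<dots> \<le> C * \<rho>^m * norm (z K) + (\<Sum>l<m. C * \<rho>^(m - Suc l) * \<delta>)"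
      proof (rule add_mono[OF Cb])
        have "norm (\<Sum>l<m. iter M (m - Suc l) (u (K + l))) \<le> (\<Sum>l<m. norm (iter M (m - Suc l) (u (K + l))))"
          by (rule norm_sum)
        also have "\<dots> \<le> (\<Sum>l<m. C * \<rho>^(m - Suc l) * \<delta>)"
        proof (rule sum_mono)
          fix l assume "l \<in> {..<m}"
          have "norm (iter M (m - Suc l) (u (K + l))) \<le> C * \<rho>^(m - Suc l) * norm (u (K + l))" by (rule Cb)
          also have "\<dots> \<le> C * \<rho>^(m - Suc l) * \<delta>"
            using K[of "K + l"] C1 \<rho> by (intro mult_left_mono) auto
          finally show "norm (iter M (m - Suc l) (u (K + l))) \<le> C * \<rho>^(m - Suc l) * \<delta>" .
        qed
        finally show "norm (\<Sum>l<m. iter M (m - Suc l) (u (K + l))) \<le> (\<Sum>l<m. C * \<rho>^(m - Suc l) * \<delta>)" .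
      qed
      also have "(\<Sum>l<m. C * \<rho>^(m - Suc l) * \<delta>) = C * \<delta> * (\<Sum>l<m. \<rho>^l)"
        by (subst sum.nat_diff_reindex[where g="\<lambda>j. C * \<rho>^j * \<delta>"]) (simp add: sum_distrib_left algebra_simps)
      also have "(\<Sum>l<m. \<rho>^l) \<le> 1 / (1 - \<rho>)"
      proof -
        have "(\<Sum>l<m. \<rho>^l) = (1 - \<rho>^m) / (1 - \<rho>)" using \<rho> by (simp add: sum_gp_strict)
        also have "\<dots> \<le> 1 / (1 - \<rho>)" using \<rho> by (intro divide_right_mono) auto
        finally show ?thesis .
      qed
      hence "C * \<delta> * (\<Sum>l<m. \<rho>^l) \<le> C * \<delta> * (1 / (1 - \<rho>))"
        using C1 \<delta> by (intro mult_left_mono) auto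
      also have "C * \<delta> * (1 / (1 - \<rho>)) = \<epsilon> / 2" unfolding \<delta>_def using C1 \<rho> by (simp add: field_simps)
      finally have "norm (z n) \<le> C * \<rho>^m * norm (z K) + \<epsilon> / 2" by simp
      moreover have "C * \<rho>^m * norm (z K) < \<epsilon> / 2" using m0[OF nm(2)] C1 \<rho>
        by (simp add: algebra_simps)
      ultimately show "norm (z n - 0) < \<epsilon>" by simp
    qed
  qed
qed


lemma smult_sum_left: "(\<Sum>i\<in>S. c i) *s (x::'a::comm_semiring_1^'n::finite) = (\<Sum>i\<in>S. c i *s x)"
  by (induction S rule: infinite_finite_induct) (simp_all add: vector_sadd_rdistrib)

lemma smult_sum_right: "c *s (\<Sum>i\<in>S. x i) = (\<Sum>i\<in>S. c *s (x i :: 'a::comm_semiring_1^'n::finite))"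
  by (induction S rule: infinite_finite_induct) (simp_all add: vector_add_ldistrib)

lemma bl_mv: "bounded_linear (\<lambda>x. (M::complex^'n::finite^'m::finite) *v x)"
proof -
  have "linear (\<lambda>x. M *v x)"
    by (rule linearI) (simp_all add: matrix_vector_right_distrib mv_scaleR)
  thus ?thesis using linear_conv_bounded_linear by auto
qed

lemma bl_smult: "bounded_linear (\<lambda>x::complex^'n::finite. c *s x)"
proof -
  have "linear (\<lambda>x::complex^'n. c *s x)"
    by (rule linearI) (simp_all add: vector_add_ldistrib Finite_Cartesian_Product.vec_eq_iff scaleR_conv_of_real[where 'a=complex] mult.left_commute)
  thus ?thesis using linear_conv_bounded_linear by auto
qed

lemma lim_mv: "g \<longlonglongrightarrow> 0 \<Longrightarrow> (\<lambda>k. (M::complex^'n::finite^'m::finite) *v g k) \<longlonglongrightarrow> 0"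
  by (rule bounded_linear.tendsto_zero[OF bl_mv])

lemma lim_smult: "g \<longlonglongrightarrow> 0 \<Longrightarrow> (\<lambda>k. c *s (g k :: complex^'n::finite)) \<longlonglongrightarrow> 0"
  by (rule bounded_linear.tendsto_zero[OF bl_smult])

lemma cascade:
  fixes f :: "nat \<Rightarrow> nat \<Rightarrow> complex^'n::finite" and B :: "complex mat"
    and Mf :: "nat \<Rightarrow> complex^'n^'n" and G :: "complex^'n^'n"
  assumes rec: "\<And>k a. 1 \<le> a \<Longrightarrow> a < n \<Longrightarrow>
      f (Suc k) a = Mf a *v f k a + - (G *v (\<Sum>c\<in>{a<..<n}. B $$ (a,c) *s f k c))"
    and stab: "\<And>a. 1 \<le> a \<Longrightarrow> a < n \<Longrightarrow> schur_stable (Mf a)"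
  shows "1 \<le> a \<Longrightarrow> a < n \<Longrightarrow> (\<lambda>k. f k a) \<longlonglongrightarrow> 0"
proof (induction "n - a" arbitrary: a rule: less_induct)
  case less
  have IH: "c \<in> {a<..<n} \<Longrightarrow> (\<lambda>k. f k c) \<longlonglongrightarrow> 0" for c
    using less by auto
  have "(\<lambda>k. \<Sum>c\<in>{a<..<n}. B $$ (a,c) *s f k c) \<longlonglongrightarrow> 0"
    by (rule tendsto_null_sum) (rule lim_smult[OF IH])
  hence u: "(\<lambda>k. - (G *v (\<Sum>c\<in>{a<..<n}. B $$ (a,c) *s f k c))) \<longlonglongrightarrow> 0"
    using lim_mv tendsto_minus by fastforce
  show ?case
    by (rule iss[OF stab[OF less(2,3)] rec[OF less(2,3)] u])
qed


section \<open>Complexification\<close>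

definition cvec :: "real^'n::finite \<Rightarrow> complex^'n" where
  "cvec w = (\<chi> a. complex_of_real (w $ a))"

lemma cvec_add: "cvec (a + b) = cvec a + cvec b"
  by (simp add: cvec_def Finite_Cartesian_Product.vec_eq_iff)

lemma cvec_diff: "cvec (a - b) = cvec a - cvec b"
  by (simp add: cvec_def Finite_Cartesian_Product.vec_eq_iff)

lemma cvec_zero: "cvec 0 = 0"
  by (simp add: cvec_def Finite_Cartesian_Product.vec_eq_iff)

lemma cvec_sum: "cvec (\<Sum>i\<in>S. g i) = (\<Sum>i\<in>S. cvec (g i))"
  by (induction S rule: infinite_finite_induct) (simp_all add: cvec_add cvec_zero)

lemma cvec_scaleR: "cvec (r *\<^sub>R w) = complex_of_real r *s cvec w"
  by (simp add: cvec_def Finite_Cartesian_Product.vec_eq_iff)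

lemma cvec_mv: "cvec ((M::real^'n::finite^'m::finite) *v w) = cmat M *v cvec w"
  by (simp add: cvec_def cmat_def Finite_Cartesian_Product.vec_eq_iff matrix_vector_mult_def)

lemma cmat_add: "cmat (M + N) = cmat M + cmat N"
  by (simp add: cmat_def Finite_Cartesian_Product.vec_eq_iff)

lemma cmat_mult: "cmat ((M::real^'k::finite^'m::finite) ** (N::real^'n::finite^'k)) = cmat M ** cmat N"
  by (simp add: cmat_def Finite_Cartesian_Product.vec_eq_iff matrix_matrix_mult_def)

lemma norm_cvec: "norm (cvec w) = norm w"
  by (simp add: cvec_def norm_vec_def)

lemma double_sum:
  "(\<Sum>b\<in>S. q b *s (\<Sum>j\<in>T. d b j *s (E j :: complex^'n::finite))) = (\<Sum>j\<in>T. (\<Sum>b\<in>S. q b * d b j) *s E j)"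
  by (simp add: smult_sum_right smult_sum_left vector_smult_assoc) (rule sum.swap)

lemma mat_mult_index:
  assumes "X \<in> carrier_mat n n" "Y \<in> carrier_mat n n" "i < n" "j < n"
  shows "(X * Y) $$ (i,j) = (\<Sum>b=0..<n. X $$ (i,b) * Y $$ (b,j))"
  using assms by (simp add: scalar_prod_def)


lemma cmat_nth[simp]: "cmat M $ i $ j = complex_of_real (M $ i $ j)"
  by (simp add: cmat_def)

lemma split_ut_sum:
  assumes "a < (n::nat)" "\<And>c. c < a \<Longrightarrow> g c = 0"
  shows "(\<Sum>c=0..<n. g c) = g a + (\<Sum>c\<in>{a<..<n}. g c)"
proof -
  have "(\<Sum>c=0..<n. g c) = (\<Sum>c=0..<a. g c) + (\<Sum>c=a..<n. g c)"
    using assms(1) by (simp add: sum.atLeastLessThan_concat)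
  also have "(\<Sum>c=0..<a. g c) = 0" using assms(2) by (intro sum.neutral) auto
  also have "(\<Sum>c=a..<n. g c) = g a + (\<Sum>c=Suc a..<n. g c)"
    using assms(1) by (rule sum.atLeast_Suc_lessThan)
  finally show ?thesis by (simp add: atLeastSucLessThan_greaterThanLessThan)
qed

lemma scaled_mat_mv: "(\<chi> p q. c * (G::complex^'n::finite^'m::finite) $ p $ q) *v w = c *s (G *v w)"
  by (simp add: Finite_Cartesian_Product.vec_eq_iff matrix_vector_mult_def sum_distrib_left mult.assoc)

theorem theorem1:
  fixes A :: "real^'n^'n" and B :: "real^'p^'n" and C :: "real^'n^'q"
    and K :: "real^'n^'p" and L :: "real^'q^'n"
    and E :: "('N::finite \<times> 'N) set" and D :: "real^'N^'N"
    and lam :: "'N \<Rightarrow> complex" and r :: 'N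
    and x :: "nat \<Rightarrow> 'N \<Rightarrow> real^'n" and v :: "nat \<Rightarrow> 'N \<Rightarrow> real^'n"
  assumes graph: "has_spanning_tree E" and stoch: "row_stochastic_of E D"
    and eigs: "charpoly (cmat D) = (\<Prod>i\<in>UNIV. [: - lam i, 1 :])"
    and root1: "lam r = 1" and others: "\<forall>i. i \<noteq> r \<longrightarrow> cmod (lam i) < 1"
    and stabK: "schur_stable (cmat (A + B ** K))"
    and stabL: "\<forall>i. i \<noteq> r \<longrightarrow> schur_stable (cmat A + (\<chi> a b. (1 - lam i) * (cmat L ** cmat C) $ a $ b))"
    and dyn_x: "\<forall>k i. x (Suc k) i = A *v x k i + B *v (K *v v k i)"
    and dyn_v: "\<forall>k i. v (Suc k) i = (A + B ** K) *v v k i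
        + L *v ((\<Sum>j\<in>UNIV. D $ i $ j *\<^sub>R (C *v (v k i - v k j)))
                - (\<Sum>j\<in>UNIV. D $ i $ j *\<^sub>R (C *v x k i - C *v x k j)))"
  shows "\<forall>i j. (\<lambda>k. norm (x k i - x k j)) \<longlonglongrightarrow> 0"
proof -
  let ?n = "CARD('N)"
  define e where "e k i = v k i - x k i" for k i
  have e_rec: "e (Suc k) i = A *v e k i + L *v (\<Sum>j\<in>UNIV. D $ i $ j *\<^sub>R (C *v (e k i - e k j)))" for k i
  proof -
    have s: "(\<Sum>j\<in>UNIV. D $ i $ j *\<^sub>R (C *v (v k i - v k j))) - (\<Sum>j\<in>UNIV. D $ i $ j *\<^sub>R (C *v x k i - C *v x k j))
       = (\<Sum>j\<in>UNIV. D $ i $ j *\<^sub>R (C *v (e k i - e k j)))"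
      unfolding sum_subtractf[symmetric] e_def
      by (rule sum.cong) (simp_all add: matrix_vector_mult_diff_distrib algebra_simps)
    show ?thesis unfolding e_def dyn_x[rule_format] dyn_v[rule_format] s[unfolded e_def]
      by (simp add: matrix_vector_mult_add_rdistrib matrix_vector_mul_assoc[symmetric] matrix_vector_mult_diff_distrib algebra_simps)
  qed
  define G where "G = cmat L ** cmat C"
  define ce where "ce k i = cvec (e k i)" for k i
  have rowsum: "(\<Sum>j\<in>UNIV. cmat D $ i $ j) = 1" for i
  proof -
    have "(\<Sum>j\<in>UNIV. D $ i $ j) = 1" using stoch unfolding row_stochastic_of_def by blast
    hence "complex_of_real (\<Sum>j\<in>UNIV. D $ i $ j) = 1" by simp
    thus ?thesis unfolding cmat_def by simp
  qed
  have ce_rec: "ce (Suc k) i = cmat A *v ce k i + G *v (ce k i - (\<Sum>j\<in>UNIV. cmat D $ i $ j *s ce k j))" for k i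
  proof -
    have "ce (Suc k) i = cmat A *v ce k i + cmat L *v (\<Sum>j\<in>UNIV. cmat D $ i $ j *s (cmat C *v (ce k i - ce k j)))"
      unfolding ce_def e_rec by (simp add: cvec_add cvec_mv cvec_sum cvec_scaleR cvec_diff)
    also have "(\<Sum>j\<in>UNIV. cmat D $ i $ j *s (cmat C *v (ce k i - ce k j))) = cmat C *v (\<Sum>j\<in>UNIV. cmat D $ i $ j *s (ce k i - ce k j))"
      by (simp only: Cartesian_Space.vec.sum vector_scalar_commute)
    also have "(\<Sum>j\<in>UNIV. cmat D $ i $ j *s (ce k i - ce k j)) = (\<Sum>j\<in>UNIV. cmat D $ i $ j) *s ce k i - (\<Sum>j\<in>UNIV. cmat D $ i $ j *s ce k j)"
      by (simp add: vector_ssub_ldistrib sum_subtractf smult_sum_left)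
    also have "(\<Sum>j\<in>UNIV. cmat D $ i $ j) = 1" by (rule rowsum)
    finally show ?thesis unfolding G_def by (simp add: matrix_vector_mul_assoc)
  qed
  define xs where "xs = r # filter (\<lambda>i. i \<noteq> r) (map (idx :: nat \<Rightarrow> 'N) [0..<?n])"
  have im: "set (map (idx :: nat \<Rightarrow> 'N) [0..<?n]) = UNIV"
    using bij_betw_imp_surj_on[OF idx_bij] by simp
  have xs_set: "set xs = UNIV" unfolding xs_def using im by auto
  have "distinct (map (idx :: nat \<Rightarrow> 'N) [0..<?n])"
    using inj_on_idx by (simp add: distinct_map)
  hence xs_dist: "distinct xs" unfolding xs_def by simp
  have xs_len: "length xs = ?n" using distinct_card[OF xs_dist] xs_set by simp
  have xs0: "xs ! 0 = r" unfolding xs_def by simp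
  have xs_ne: "1 \<le> i \<Longrightarrow> i < ?n \<Longrightarrow> xs ! i \<noteq> r" for i
  proof -
    assume i: "1 \<le> i" "i < ?n"
    define ys where "ys = filter (\<lambda>i. i \<noteq> r) (map (idx :: nat \<Rightarrow> 'N) [0..<?n])"
    have xs': "xs = r # ys" unfolding xs_def ys_def ..
    have "length ys = ?n - 1" using xs_len xs' by simp
    hence "i - 1 < length ys" using i by simp
    hence "ys ! (i - 1) \<in> set ys" by (rule nth_mem)
    moreover have "xs ! i = ys ! (i - 1)" using i xs' by (cases i) auto
    ultimately show ?thesis unfolding ys_def by auto
  qed
  define Dm where "Dm = to_mat (cmat D)"
  have Dm_c: "Dm \<in> carrier_mat ?n ?n" unfolding Dm_def by simp
  have cp: "char_poly Dm = (\<Prod>a\<leftarrow>map lam xs. [:- a, 1:])"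
  proof -
    have "char_poly Dm = (\<Prod>i\<in>UNIV. [: - lam i, 1 :])" unfolding Dm_def charpoly_bridge[symmetric] by (rule eigs)
    also have "\<dots> = (\<Prod>i\<in>set xs. [: - lam i, 1 :])" unfolding xs_set ..
    also have "\<dots> = (\<Prod>i\<leftarrow>xs. [: - lam i, 1 :])" by (rule prod.distinct_set_conv_list[OF xs_dist])
    finally show ?thesis by (simp add: o_def)
  qed
  obtain BB P Q where sd: "schur_decomposition Dm (map lam xs) = (BB, P, Q)"
    by (cases "schur_decomposition Dm (map lam xs)") auto
  note sch = schur_decomposition[OF Dm_c cp sd]
  have BB_c: "BB \<in> carrier_mat ?n ?n" and P_c: "P \<in> carrier_mat ?n ?n" and Q_c: "Q \<in> carrier_mat ?n ?n"
    and PQ: "P * Q = 1\<^sub>m ?n" and QP: "Q * P = 1\<^sub>m ?n" and DPBQ: "Dm = P * BB * Q"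
    using sch Dm_c unfolding similar_mat_wit_def Let_def by auto
  have BB_diag: "i < ?n \<Longrightarrow> BB $$ (i,i) = lam (xs ! i)" for i
  proof -
    assume i: "i < ?n"
    have "diag_mat BB ! i = map lam xs ! i" using sch by simp
    thus ?thesis using i BB_c xs_len unfolding diag_mat_def by simp
  qed
  have BB_ut: "i < ?n \<Longrightarrow> j < i \<Longrightarrow> BB $$ (i,j) = 0" for i j
    using sch BB_c unfolding upper_triangular_def by auto
  have QD: "Q * Dm = BB * Q"
  proof -
    have "Q * Dm = Q * (P * (BB * Q))" unfolding DPBQ using Q_c P_c BB_c by simp
    also have "\<dots> = (Q * P) * (BB * Q)" by (rule assoc_mult_mat[symmetric, OF Q_c P_c mult_carrier_mat[OF BB_c Q_c]])
    also have "\<dots> = BB * Q" unfolding QP using BB_c Q_c by (simp add: left_mult_one_mat)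
    finally show ?thesis .
  qed
  define EE where "EE k b = ce k (idx b)" for k b
  define f where "f k a = (\<Sum>b=0..<?n. Q $$ (a,b) *s EE k b)" for k a
  define Mf where "Mf a = cmat A + (\<chi> p q. (1 - lam (xs ! a)) * G $ p $ q)" for a
  have f_rec: "f (Suc k) a = Mf a *v f k a + - (G *v (\<Sum>c\<in>{a<..<?n}. BB $$ (a,c) *s f k c))"
    if "1 \<le> a" "a < ?n" for k a
  proof -
    define S where "S b = (\<Sum>j=0..<?n. Dm $$ (b,j) *s EE k j)" for b
    have EEsuc: "EE (Suc k) b = cmat A *v EE k b + G *v (EE k b - S b)" if "b < ?n" for b
    proof -
      have "(\<Sum>j\<in>UNIV. cmat D $ idx b $ j *s ce k j) = (\<Sum>j=0..<?n. cmat D $ idx b $ idx j *s ce k (idx j))"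
        by (rule sum_idx)
      also have "\<dots> = S b" unfolding S_def EE_def Dm_def
        by (rule sum.cong) (use that in auto)
      finally show ?thesis unfolding EE_def ce_rec by simp
    qed
    have "f (Suc k) a = (\<Sum>b=0..<?n. cmat A *v (Q $$ (a,b) *s EE k b) + G *v (Q $$ (a,b) *s EE k b) - G *v (Q $$ (a,b) *s S b))"
      unfolding f_def
      by (rule sum.cong) (simp_all add: EEsuc vector_add_ldistrib vector_ssub_ldistrib vector_scalar_commute
          matrix_vector_right_distrib matrix_vector_mult_diff_distrib)
    also have "\<dots> = cmat A *v f k a + G *v f k a - G *v (\<Sum>b=0..<?n. Q $$ (a,b) *s S b)"
      unfolding f_def by (simp only: sum.distrib sum_subtractf Cartesian_Space.vec.sum)
    also have "(\<Sum>b=0..<?n. Q $$ (a,b) *s S b) = (\<Sum>j=0..<?n. (\<Sum>b=0..<?n. Q $$ (a,b) * Dm $$ (b,j)) *s EE k j)"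
      unfolding S_def by (rule double_sum)
    also have "\<dots> = (\<Sum>j=0..<?n. (\<Sum>c=0..<?n. BB $$ (a,c) * Q $$ (c,j)) *s EE k j)"
    proof (rule sum.cong[OF refl])
      fix j assume j: "j \<in> {0..<?n}"
      have "(\<Sum>b=0..<?n. Q $$ (a,b) * Dm $$ (b,j)) = (Q * Dm) $$ (a,j)"
        using mat_mult_index[OF Q_c Dm_c] j that by simp
      also have "\<dots> = (BB * Q) $$ (a,j)" unfolding QD ..
      also have "\<dots> = (\<Sum>c=0..<?n. BB $$ (a,c) * Q $$ (c,j))"
        using mat_mult_index[OF BB_c Q_c] j that by simp
      finally show "(\<Sum>b=0..<?n. Q $$ (a,b) * Dm $$ (b,j)) *s EE k j = (\<Sum>c=0..<?n. BB $$ (a,c) * Q $$ (c,j)) *s EE k j"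
        by simp
    qed
    also have "\<dots> = (\<Sum>c=0..<?n. BB $$ (a,c) *s f k c)"
      unfolding f_def by (rule double_sum[symmetric])
    also have "\<dots> = BB $$ (a,a) *s f k a + (\<Sum>c\<in>{a<..<?n}. BB $$ (a,c) *s f k c)"
      by (rule split_ut_sum) (use that BB_ut in auto)
    finally have fs: "f (Suc k) a = cmat A *v f k a + G *v f k a - G *v (BB $$ (a,a) *s f k a + (\<Sum>c\<in>{a<..<?n}. BB $$ (a,c) *s f k c))" .
    have Mfv: "Mf a *v f k a = cmat A *v f k a + (1 - BB $$ (a,a)) *s (G *v f k a)"
      unfolding Mf_def BB_diag[OF that(2)] by (simp add: matrix_vector_mult_add_rdistrib scaled_mat_mv)
    show ?thesis unfolding fs Mfv
      by (simp add: matrix_vector_right_distrib vector_scalar_commute vector_sub_rdistrib)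
  qed
  have Mf_stab: "schur_stable (Mf a)" if "1 \<le> a" "a < ?n" for a
    using stabL xs_ne[OF that] unfolding Mf_def G_def by blast
  have flim: "(\<lambda>k. f k a) \<longlonglongrightarrow> 0" if "1 \<le> a" "a < ?n" for a
    by (rule cascade[of ?n f Mf G BB, OF f_rec Mf_stab that])
  have E_rep: "EE k i = (\<Sum>a=0..<?n. P $$ (i,a) *s f k a)" if "i < ?n" for k i
  proof -
    have "(\<Sum>a=0..<?n. P $$ (i,a) *s f k a) = (\<Sum>b=0..<?n. (\<Sum>a=0..<?n. P $$ (i,a) * Q $$ (a,b)) *s EE k b)"
      unfolding f_def by (rule double_sum)
    also have "\<dots> = (\<Sum>b=0..<?n. (if b = i then EE k b else 0))"
    proof (rule sum.cong[OF refl])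
      fix b assume b: "b \<in> {0..<?n}"
      have "(\<Sum>a=0..<?n. P $$ (i,a) * Q $$ (a,b)) = (P * Q) $$ (i,b)"
        using mat_mult_index[OF P_c Q_c] b that by simp
      also have "\<dots> = (if i = b then 1 else 0)" unfolding PQ using b that by simp
      finally show "(\<Sum>a=0..<?n. P $$ (i,a) * Q $$ (a,b)) *s EE k b = (if b = i then EE k b else 0)"
        by auto
    qed
    also have "\<dots> = EE k i" using that by simp
    finally show ?thesis ..
  qed
  have Pcol: "P $$ (i,0) = P $$ (j,0)" if "i < ?n" "j < ?n" for i j
  proof -
    define one :: "complex Matrix.vec" where "one = Matrix.vec ?n (\<lambda>_. 1)"
    have one_c: "one \<in> carrier_vec ?n" unfolding one_def by simp
    have Done: "Dm *\<^sub>v one = one"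
    proof (rule eq_vecI)
      fix i assume "i < dim_vec one"
      hence i: "i < ?n" unfolding one_def by simp
      have "vec_index (Dm *\<^sub>v one) i = (\<Sum>j=0..<?n. Dm $$ (i,j))"
        using i Dm_c by (simp add: one_def scalar_prod_def)
      also have "\<dots> = (\<Sum>j=0..<?n. cmat D $ idx i $ idx j)"
        unfolding Dm_def by (rule sum.cong) (use i in auto)
      also have "\<dots> = 1" using rowsum[of "idx i"] unfolding sum_idx[where 'a='N] .
      finally show "vec_index (Dm *\<^sub>v one) i = vec_index one i" using i by (simp add: one_def)
    qed (use Dm_c in \<open>simp add: one_def\<close>)
    define q where "q = Q *\<^sub>v one"
    have q_c: "q \<in> carrier_vec ?n" unfolding q_def using Q_c one_c by simp
    have Bq: "BB *\<^sub>v q = q"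
    proof -
      have "BB *\<^sub>v q = (BB * Q) *\<^sub>v one" unfolding q_def
        by (rule assoc_mult_mat_vec[symmetric, OF BB_c Q_c one_c])
      also have "\<dots> = Q *\<^sub>v (Dm *\<^sub>v one)" unfolding QD[symmetric]
        by (rule assoc_mult_mat_vec[OF Q_c Dm_c one_c])
      finally show ?thesis unfolding Done q_def .
    qed
    have Bq_i: "(\<Sum>j=0..<?n. BB $$ (i,j) * vec_index q j) = vec_index q i" if "i < ?n" for i
    proof -
      have "vec_index (BB *\<^sub>v q) i = vec_index q i" unfolding Bq ..
      thus ?thesis using that BB_c q_c by (simp add: scalar_prod_def)
    qed
    have q0: "vec_index q i = 0" if "1 \<le> i" "i < ?n" for i
      using that
    proof (induction "?n - i" arbitrary: i rule: less_induct)
      case less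
      have "vec_index q i = (\<Sum>j=0..<?n. BB $$ (i,j) * vec_index q j)" using Bq_i[OF less(3)] ..
      also have "\<dots> = BB $$ (i,i) * vec_index q i + (\<Sum>j\<in>{i<..<?n}. BB $$ (i,j) * vec_index q j)"
        by (rule split_ut_sum) (use less BB_ut in auto)
      also have "(\<Sum>j\<in>{i<..<?n}. BB $$ (i,j) * vec_index q j) = 0"
        by (rule sum.neutral) (use less in auto)
      finally have "(BB $$ (i,i) - 1) * vec_index q i = 0" by (simp add: algebra_simps)
      moreover have "BB $$ (i,i) \<noteq> 1"
        unfolding BB_diag[OF less(3)] using others xs_ne[OF less(2,3)] by force
      ultimately show ?case by simp
    qed
    have Pq: "P *\<^sub>v q = one"
    proof -
      have "P *\<^sub>v q = (P * Q) *\<^sub>v one" unfolding q_def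
        by (rule assoc_mult_mat_vec[symmetric, OF P_c Q_c one_c])
      thus ?thesis unfolding PQ using one_c by simp
    qed
    have n0: "0 < ?n" by simp
    have Pi: "P $$ (i,0) * vec_index q 0 = 1" if "i < ?n" for i
    proof -
      have "vec_index (P *\<^sub>v q) i = 1" unfolding Pq using that by (simp add: one_def)
      hence "(\<Sum>a=0..<?n. P $$ (i,a) * vec_index q a) = 1" using that P_c q_c by (simp add: scalar_prod_def)
      also have "(\<Sum>a=0..<?n. P $$ (i,a) * vec_index q a) = P $$ (i,0) * vec_index q 0 + (\<Sum>a\<in>{0<..<?n}. P $$ (i,a) * vec_index q a)"
        by (rule split_ut_sum[OF n0]) auto
      also have "(\<Sum>a\<in>{0<..<?n}. P $$ (i,a) * vec_index q a) = 0"
        by (rule sum.neutral) (auto simp: q0)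
      finally show ?thesis by simp
    qed
    have "vec_index q 0 \<noteq> 0" using Pi[OF that(1)] by auto
    thus ?thesis using Pi[OF that(1)] Pi[OF that(2)] by (metis mult_right_cancel)
  qed
  have Elim: "(\<lambda>k. EE k i - EE k j) \<longlonglongrightarrow> 0" if "i < ?n" "j < ?n" for i j
  proof -
    have n0: "0 < ?n" by simp
    have eq: "EE k i - EE k j = (\<Sum>a\<in>{0<..<?n}. (P $$ (i,a) - P $$ (j,a)) *s f k a)" for k
    proof -
      have "EE k i - EE k j = (\<Sum>a=0..<?n. (P $$ (i,a) - P $$ (j,a)) *s f k a)"
        unfolding E_rep[OF that(1)] E_rep[OF that(2)] by (simp add: sum_subtractf vector_sub_rdistrib)
      also have "\<dots> = (P $$ (i,0) - P $$ (j,0)) *s f k 0 + (\<Sum>a\<in>{0<..<?n}. (P $$ (i,a) - P $$ (j,a)) *s f k a)"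
        by (rule split_ut_sum[OF n0]) auto
      finally show ?thesis using Pcol[OF that] by simp
    qed
    show ?thesis unfolding eq
      by (rule tendsto_null_sum, rule lim_smult, rule flim) auto
  qed
  have celim: "(\<lambda>k. ce k i - ce k j) \<longlonglongrightarrow> 0" for i j
    using Elim[of "unidx i" "unidx j"] unfolding EE_def by simp
  show ?thesis
  proof (intro allI)
    fix i j
    define dl where "dl k = cvec (x k i - x k j)" for k
    have dl_rec: "dl (Suc k) = cmat (A + B ** K) *v dl k + cmat (B ** K) *v (ce k i - ce k j)" for k
    proof -
      have "x (Suc k) i - x (Suc k) j = (A + B ** K) *v (x k i - x k j) + (B ** K) *v (e k i - e k j)"
        unfolding dyn_x[rule_format] e_def
        by (simp add: matrix_vector_mul_assoc matrix_vector_mult_add_rdistrib matrix_vector_mult_diff_distrib algebra_simps)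
      thus ?thesis unfolding dl_def ce_def by (simp add: cvec_add cvec_mv cvec_diff)
    qed
    have "(\<lambda>k. cmat (B ** K) *v (ce k i - ce k j)) \<longlonglongrightarrow> 0"
      by (rule lim_mv[OF celim])
    hence "dl \<longlonglongrightarrow> 0" by (rule iss[where z=dl and u="\<lambda>k. cmat (B ** K) *v (ce k i - ce k j)", OF stabK dl_rec])
    hence "(\<lambda>k. norm (dl k)) \<longlonglongrightarrow> 0" by (rule tendsto_norm_zero)
    thus "(\<lambda>k. norm (x k i - x k j)) \<longlonglongrightarrow> 0" unfolding dl_def norm_cvec .
  qed
qed

end
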